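(* Let $T$ and $k$ be positive integers and let $p_1,\dots,p_k\in(0,1]$, with $q_i=1-p_i$. Consider blocks $i=1,\dots,k$, each of $T$ slots. In block $i$ the slot success indicators are i.i.d. Bernoulli$(p_i)$, and the blocks are independent. Block $0$ is a virtual block that is always successful and ends with a success; accordingly set $p_0=1$ and $q_0=0$. Let $Z(i)$ indicate that block $i$ contains at least one success. On the event $Z(k)=1$, define the following quantities: - $\kappa\in\{1,\dots,k\}$, such that $k-\kappa$ is the most recent block before $k$ with $Z(k-\kappa)=1$; - $W_{k-\kappa}$, the number of failure slots after the last success in block $k-\kappa$; - $X_k$, the number of failure slots before the first success in block $k$. The peak latency of the first successfully received input in block $k$ is $$\mathcal{L}^{\rm P}_{\kappa,k}=T(\kappa-1)+W_{k-\kappa}+X_k+1.$$ Then $\Theta^{\rm pl}_k:=\mathbb{E}[\mathcal{L}^{\rm P}_{\kappa,k}\mid Z(k)=1]$ equals $$\sum_{\kappa=1}^{k}(1-q_{k-\kappa}^T)\Big[\prod_{i=k-\kappa+1}^{k-1}q_i^T\Big]\Big[\frac{q_{k-\kappa}}{p_{k-\kappa}}+T\kappa\Big]-T\sum_{\kappa=1}^{k}\Big[\prod_{i=k-\kappa}^{k-1}q_i^T\Big]-T+\Big(\frac{q_k}{p_k}-\frac{Tq_k^T}{1-q_k^T}\Big)+1.$$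
   Context: Empty products equal $1$. The block-$0$ convention means block $0$ is always treated as a successful block, so $\kappa=k$ corresponds to no successful block among $1,\dots,k-1$. *)

theory Defs
  imports "HOL-Probability.Probability"
begin

text \<open>Outcome: a function w :: nat \<times> nat \<Rightarrow> bool, w (i,j) = success of slot j (0 \<le> j < T)
  in block i (1 \<le> i \<le> k). Slots are independent Bernoulli(p i) for block i.\<close>

definition slot_space :: "nat \<Rightarrow> nat \<Rightarrow> (nat \<Rightarrow> real) \<Rightarrow> (nat \<times> nat \<Rightarrow> bool) pmf" where
  "slot_space T k p = Pi_pmf ({1..k} \<times> {..<T}) False (\<lambda>(i,j). bernoulli_pmf (p i))"

definition Zb :: "nat \<Rightarrow> (nat \<times> nat \<Rightarrow> bool) \<Rightarrow> nat \<Rightarrow> bool" where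
  "Zb T w i \<longleftrightarrow> i = 0 \<or> (\<exists>j<T. w (i,j))"

definition kappa :: "nat \<Rightarrow> nat \<Rightarrow> (nat \<times> nat \<Rightarrow> bool) \<Rightarrow> nat" where
  "kappa T k w = (LEAST m. 1 \<le> m \<and> m \<le> k \<and> Zb T w (k - m))"

text \<open>W: number of failure slots after the last success in block b (0 for the virtual block 0,
  which ends with a success).\<close>
definition Wb :: "nat \<Rightarrow> (nat \<times> nat \<Rightarrow> bool) \<Rightarrow> nat \<Rightarrow> nat" where
  "Wb T w b = (if b = 0 then 0 else T - 1 - (GREATEST j. j < T \<and> w (b,j)))"

definition Xb :: "nat \<Rightarrow> (nat \<times> nat \<Rightarrow> bool) \<Rightarrow> nat \<Rightarrow> nat" where
  "Xb T w b = (LEAST j. j < T \<and> w (b,j))"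

definition peak_latency :: "nat \<Rightarrow> nat \<Rightarrow> (nat \<times> nat \<Rightarrow> bool) \<Rightarrow> real" where
  "peak_latency T k w =
     real (T * (kappa T k w - 1) + Wb T w (k - kappa T k w) + Xb T w k + 1)"

end

theory Submission
  imports Defs
begin


lemma fin_Pi_pmf:
  assumes "finite A"
  shows "finite (set_pmf (Pi_pmf A (dflt::bool) P))"
proof -
  have "set_pmf (Pi_pmf A dflt P) \<subseteq> PiE_dflt A dflt (set_pmf \<circ> P)"
    using assms by (rule set_Pi_pmf_subset')
  moreover have "finite (PiE_dflt A dflt (set_pmf \<circ> P))"
    using assms by (intro finite_PiE_dflt) auto
  ultimately show ?thesis by (rule finite_subset)
qed

lemma fin_bern: "finite (set_pmf (bernoulli_pmf q))"
  by (rule finite_subset[of _ UNIV]) auto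

lemma exp_pair:
  fixes h :: "'a \<times> 'b \<Rightarrow> real"
  assumes "finite (set_pmf M)" "finite (set_pmf N)"
  shows "measure_pmf.expectation (pair_pmf M N) h
     = measure_pmf.expectation M (\<lambda>a. measure_pmf.expectation N (\<lambda>b. h (a,b)))"
proof -
  have "measure_pmf.expectation (pair_pmf M N) h = (\<Sum>x\<in>set_pmf M \<times> set_pmf N. h x * pmf (pair_pmf M N) x)"
    using assms by (intro integral_measure_pmf_real) auto
  also have "\<dots> = (\<Sum>a\<in>set_pmf M. \<Sum>b\<in>set_pmf N. h (a,b) * pmf M a * pmf N b)"
    by (subst sum.cartesian_product) (intro sum.cong refl, auto simp: pmf_pair mult.assoc)
  also have "\<dots> = (\<Sum>a\<in>set_pmf M. (\<Sum>b\<in>set_pmf N. h (a,b) * pmf N b) * pmf M a)"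
    by (simp add: sum_distrib_left sum_distrib_right mult_ac)
  also have "\<dots> = (\<Sum>a\<in>set_pmf M. measure_pmf.expectation N (\<lambda>b. h (a,b)) * pmf M a)"
    using assms by (intro sum.cong refl arg_cong2[where f="(*)"] integral_measure_pmf_real[symmetric]) auto
  also have "\<dots> = measure_pmf.expectation M (\<lambda>a. measure_pmf.expectation N (\<lambda>b. h (a,b)))"
    using assms by (intro integral_measure_pmf_real[symmetric]) auto
  finally show ?thesis .
qed

lemma exp_cond:
  fixes f :: "'a \<Rightarrow> real"
  assumes "finite (set_pmf M)" "set_pmf M \<inter> A \<noteq> {}"
  shows "measure_pmf.expectation (cond_pmf M A) f
     = measure_pmf.expectation M (\<lambda>x. (if x \<in> A then f x else 0)) / measure_pmf.prob M A"
proof -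
  have "measure_pmf.expectation (cond_pmf M A) f = (\<Sum>a\<in>set_pmf M. f a * pmf (cond_pmf M A) a)"
    using assms by (intro integral_measure_pmf_real) auto
  also have "\<dots> = (\<Sum>a\<in>set_pmf M. (if a \<in> A then f a else 0) * pmf M a) / measure_pmf.prob M A"
    by (subst sum_divide_distrib) (intro sum.cong refl, auto simp: pmf_cond[OF assms(2)])
  also have "(\<Sum>a\<in>set_pmf M. (if a \<in> A then f a else 0) * pmf M a) = measure_pmf.expectation M (\<lambda>x. (if x \<in> A then f x else 0))"
    using assms by (intro integral_measure_pmf_real[symmetric]) auto
  finally show ?thesis .
qed

lemma exp_lin3:
  fixes f g :: "'a \<Rightarrow> real"
  assumes "finite (set_pmf M)"
  shows "measure_pmf.expectation M (\<lambda>x. a + c * f x + d * g x) = a + c * measure_pmf.expectation M f + d * measure_pmf.expectation M g"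
proof -
  have i: "integrable M h" for h :: "'a \<Rightarrow> real" using assms by (rule integrable_measure_pmf_finite)
  show ?thesis
    by (subst Bochner_Integration.integral_add, (auto intro!: i)[2])+ (simp add: i)
qed

lemma exp_lin:
  fixes f g :: "'a \<Rightarrow> real"
  assumes "finite (set_pmf M)"
  shows "measure_pmf.expectation M (\<lambda>x. f x + c * g x) = measure_pmf.expectation M f + c * measure_pmf.expectation M g"
  using assms by (subst Bochner_Integration.integral_add) (auto intro: integrable_measure_pmf_finite)

abbreviation BP :: "(nat \<Rightarrow> real) \<Rightarrow> nat \<times> nat \<Rightarrow> bool pmf" where
  "BP p \<equiv> (\<lambda>(i,j). bernoulli_pmf (p i))"

lemma blk_insert: "Pi_pmf ({b}\<times>{..<Suc t}) False (BP p) = map_pmf (\<lambda>(y,f). f((b,t):=y))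
    (pair_pmf (bernoulli_pmf (p b)) (Pi_pmf ({b}\<times>{..<t}) False (BP p)))"
proof -
  have "{b}\<times>{..<Suc t} = insert (b,t) ({b}\<times>{..<t})" by auto
  then show ?thesis by (simp add: Pi_pmf_insert)
qed

definition Zt :: "nat \<Rightarrow> (nat\<times>nat \<Rightarrow> bool) \<Rightarrow> nat \<Rightarrow> bool" where
  "Zt t w b \<longleftrightarrow> (\<exists>j<t. w (b,j))"
definition Xt :: "nat \<Rightarrow> (nat\<times>nat \<Rightarrow> bool) \<Rightarrow> nat \<Rightarrow> nat" where
  "Xt t w b = (LEAST j. j < t \<and> w (b,j))"
definition Wt :: "nat \<Rightarrow> (nat\<times>nat \<Rightarrow> bool) \<Rightarrow> nat \<Rightarrow> nat" where
  "Wt t w b = t - 1 - (GREATEST j. j < t \<and> w (b,j))"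

lemma blk_Z:
  assumes "0 \<le> p b" "p b \<le> 1"
  shows "measure_pmf.expectation (Pi_pmf ({b}\<times>{..<t}) False (BP p)) (\<lambda>w. if Zt t w b then 0 else 1) = (1 - p b)^t"
proof (induction t)
  case 0
  show ?case by (simp add: Zt_def)
next
  case (Suc t)
  let ?B = "Pi_pmf ({b}\<times>{..<t}) False (BP p)"
  have fin: "finite (set_pmf ?B)" by (rule fin_Pi_pmf) auto
  have eq: "Zt (Suc t) (f((b,t):=y)) b = (Zt t f b \<or> y)" for f y
    by (auto simp: Zt_def less_Suc_eq)
  have "measure_pmf.expectation (Pi_pmf ({b}\<times>{..<Suc t}) False (BP p)) (\<lambda>w. if Zt (Suc t) w b then 0 else (1::real))
      = measure_pmf.expectation (bernoulli_pmf (p b)) (\<lambda>y. measure_pmf.expectation ?B (\<lambda>f. if Zt t f b \<or> y then 0 else 1))"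
    apply (subst blk_insert)
    apply (subst integral_map_pmf)
    apply (subst exp_pair[OF fin_bern fin])
    apply (simp add: eq)
    done
  also have "\<dots> = (1 - p b) * (1 - p b)^t" using assms Suc.IH by simp
  finally show ?case by simp
qed

lemma Zt_upd: "Zt (Suc t) (f((b,t):=y)) b = (Zt t f b \<or> y)"
  by (auto simp: Zt_def less_Suc_eq)

lemma Xt_upd:
  assumes "Zt t f b" shows "Xt (Suc t) (f((b,t):=y)) b = Xt t f b"
proof -
  define m where "m = (LEAST j. j < t \<and> f (b,j))"
  from assms obtain j where j: "j < t" "f (b,j)" by (auto simp: Zt_def)
  have m: "m < t \<and> f (b,m)" unfolding m_def by (rule LeastI[of _ j]) (use j in auto)
  have mn: "m \<le> i" if "i < t" "f (b,i)" for i unfolding m_def by (rule Least_le) (use that in auto)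
  have "(LEAST j. j < Suc t \<and> (f((b,t):=y)) (b,j)) = m"
    by (rule Least_equality) (use m mn in \<open>auto simp: less_Suc_eq split: if_splits\<close>)
  then show ?thesis by (simp add: Xt_def m_def)
qed

lemma Xt_upd2:
  assumes "\<not> Zt t f b" shows "Xt (Suc t) (f((b,t):=True)) b = t"
  unfolding Xt_def
  by (rule Least_equality) (use assms in \<open>auto simp: less_Suc_eq Zt_def split: if_splits\<close>)

lemma Wt_upd_T: "Wt (Suc t) (f((b,t):=True)) b = 0"
proof -
  have "(GREATEST j. j < Suc t \<and> (f((b,t):=True)) (b,j)) = t"
    by (rule Greatest_equality) auto
  then show ?thesis by (simp add: Wt_def)
qed

lemma Wt_upd_F:
  assumes "Zt t f b" shows "Wt (Suc t) (f((b,t):=False)) b = Wt t f b + 1"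
proof -
  have e: "(\<lambda>j. j < Suc t \<and> (f((b,t):=False)) (b,j)) = (\<lambda>j. j < t \<and> f (b,j))"
    by (auto simp: less_Suc_eq fun_eq_iff)
  define G where "G = (GREATEST j. j < t \<and> f (b,j))"
  from assms obtain j where j: "j < t" "f (b,j)" by (auto simp: Zt_def)
  have "G < t \<and> f (b,G)" unfolding G_def
    by (rule GreatestI_ex_nat[where b=t]) (use j in auto)
  moreover have "Wt (Suc t) (f((b,t):=False)) b = Suc t - 1 - G"
    unfolding Wt_def e G_def by simp
  moreover have "Wt t f b = t - 1 - G" by (simp add: Wt_def G_def)
  ultimately show ?thesis by linarith
qed

lemma blk_X:
  assumes "0 < p b" "p b \<le> 1"
  shows "measure_pmf.expectation (Pi_pmf ({b}\<times>{..<t}) False (BP p)) (\<lambda>w. if Zt t w b then real (Xt t w b) else 0)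
     = (1 - p b) * (1 - (1 - p b)^t) / p b - real t * (1 - p b)^t"
proof (induction t)
  case 0
  show ?case by (simp add: Zt_def)
next
  case (Suc t)
  let ?B = "Pi_pmf ({b}\<times>{..<t}) False (BP p)"
  have fin: "finite (set_pmf ?B)" by (rule fin_Pi_pmf) auto
  have eq: "(if Zt (Suc t) (f((b,t):=y)) b then real (Xt (Suc t) (f((b,t):=y)) b) else 0)
     = 0 + 1 * (if Zt t f b then real (Xt t f b) else 0) + (if y then real t else 0) * (if Zt t f b then 0 else 1)" for f y
    by (cases "Zt t f b"; cases y) (auto simp: Zt_upd Xt_upd Xt_upd2)
  have "measure_pmf.expectation (Pi_pmf ({b}\<times>{..<Suc t}) False (BP p)) (\<lambda>w. if Zt (Suc t) w b then real (Xt (Suc t) w b) else 0)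
      = measure_pmf.expectation (bernoulli_pmf (p b)) (\<lambda>y. measure_pmf.expectation ?B
          (\<lambda>f. 0 + 1 * (if Zt t f b then real (Xt t f b) else 0) + (if y then real t else 0) * (if Zt t f b then 0 else 1)))"
    apply (subst blk_insert)
    apply (subst integral_map_pmf)
    apply (subst exp_pair[OF fin_bern fin])
    apply (simp only: eq case_prod_conv)
    done
  also have "\<dots> = p b * ((1 - p b) * (1 - (1 - p b)^t) / p b - real t * (1 - p b)^t + real t * (1 - p b)^t)
       + (1 - p b) * ((1 - p b) * (1 - (1 - p b)^t) / p b - real t * (1 - p b)^t)"
    apply (simp only: exp_lin3[OF fin] Suc.IH blk_Z[of p b, OF less_imp_le[OF assms(1)] assms(2)])
    using assms by simp
  also have "\<dots> = (1 - p b) * (1 - (1 - p b)^Suc t) / p b - real (Suc t) * (1 - p b)^Suc t"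
    using assms by (simp add: field_simps)
  finally show ?case .
qed

lemma blk_W:
  assumes "0 < p b" "p b \<le> 1"
  shows "measure_pmf.expectation (Pi_pmf ({b}\<times>{..<t}) False (BP p)) (\<lambda>w. if Zt t w b then real (Wt t w b) else 0)
     = (1 - p b) * (1 - (1 - p b)^t) / p b - real t * (1 - p b)^t"
proof (induction t)
  case 0
  show ?case by (simp add: Zt_def)
next
  case (Suc t)
  let ?B = "Pi_pmf ({b}\<times>{..<t}) False (BP p)"
  have fin: "finite (set_pmf ?B)" by (rule fin_Pi_pmf) auto
  have eq: "(if Zt (Suc t) (f((b,t):=y)) b then real (Wt (Suc t) (f((b,t):=y)) b) else 0)
     = (if y then 0 else 1) + (if y then 0 else 1) * (if Zt t f b then real (Wt t f b) else 0) + (if y then 0 else -1) * (if Zt t f b then 0 else 1)" for f y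
    by (cases "Zt t f b"; cases y) (auto simp: Zt_upd Wt_upd_T Wt_upd_F)
  have "measure_pmf.expectation (Pi_pmf ({b}\<times>{..<Suc t}) False (BP p)) (\<lambda>w. if Zt (Suc t) w b then real (Wt (Suc t) w b) else 0)
      = measure_pmf.expectation (bernoulli_pmf (p b)) (\<lambda>y. measure_pmf.expectation ?B
          (\<lambda>f. (if y then 0 else 1) + (if y then 0 else 1) * (if Zt t f b then real (Wt t f b) else 0) + (if y then 0 else -1) * (if Zt t f b then 0 else 1)))"
    apply (subst blk_insert)
    apply (subst integral_map_pmf)
    apply (subst exp_pair[OF fin_bern fin])
    apply (simp only: eq case_prod_conv)
    done
  also have "\<dots> = (1 - p b) * (1 + ((1 - p b) * (1 - (1 - p b)^t) / p b - real t * (1 - p b)^t) - (1 - p b)^t)"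
    apply (simp only: exp_lin3[OF fin] Suc.IH blk_Z[of p b, OF less_imp_le[OF assms(1)] assms(2)])
    using assms by simp
  also have "\<dots> = (1 - p b) * (1 - (1 - p b)^Suc t) / p b - real (Suc t) * (1 - p b)^Suc t"
    using assms by (simp add: field_simps)
  finally show ?case .
qed



primrec ddg :: "real \<Rightarrow> (nat\<Rightarrow>real) \<Rightarrow> (nat\<Rightarrow>real) \<Rightarrow> nat \<Rightarrow> real" where
  "ddg T Q r 0 = 0"
| "ddg T Q r (Suc n) = (1 - Q (Suc n)) * r (Suc n) - T * Q (Suc n) + Q (Suc n) * (T + ddg T Q r n)"

lemma tele: "(\<Sum>b<Suc n. (1 - Q b) * (\<Prod>i=b+1..n. Q i)) = 1 - (\<Prod>i=0..n. (Q i :: real))"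
proof (induction n)
  case 0
  then show ?case by simp
next
  case (Suc n)
  have A: "(\<Sum>b<Suc (Suc n). (1 - Q b) * (\<Prod>i=b+1..Suc n. Q i))
      = (\<Sum>b<Suc n. (1 - Q b) * (\<Prod>i=b+1..Suc n. Q i)) + (1 - Q (Suc n))"
    by (simp only: sum.lessThan_Suc[of _ "Suc n"]) simp
  have B: "(\<Sum>b<Suc n. (1 - Q b) * (\<Prod>i=b+1..Suc n. Q i)) = Q (Suc n) * (\<Sum>b<Suc n. (1 - Q b) * (\<Prod>i=b+1..n. Q i))"
    by (simp only: sum_distrib_left) (intro sum.cong refl, simp add: prod.nat_ivl_Suc')
  show ?case
    by (simp only: A B Suc.IH) (simp add: prod.nat_ivl_Suc'[of 0] algebra_simps)
qed

lemma alg_main: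
  fixes Q r :: "nat \<Rightarrow> real"
  assumes "Q 0 = 0" "r 0 = 0"
  shows "(\<Sum>b<Suc n. (1 - Q b) * (\<Prod>i=b+1..n. Q i) * (r b + T * real (Suc n - b)))
          - T * (\<Sum>b<Suc n. \<Prod>i=b..n. Q i) - T = ddg T Q r n"
proof (induction n)
  case 0
  then show ?case using assms by simp
next
  case (Suc n)
  have t: "(\<Sum>b<Suc n. (1 - Q b) * (\<Prod>i=b+1..n. Q i)) = 1"
  proof -
    have "(\<Prod>i=0..n. Q i) = 0" using assms by (intro prod_zero) auto
    then show ?thesis by (simp only: tele)
  qed
  have s1: "(\<Sum>b<Suc (Suc n). (1 - Q b) * (\<Prod>i=b+1..Suc n. Q i) * (r b + T * real (Suc (Suc n) - b)))
     = Q (Suc n) * (\<Sum>b<Suc n. (1 - Q b) * (\<Prod>i=b+1..n. Q i) * (r b + T * real (Suc n - b)))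
       + Q (Suc n) * T * (\<Sum>b<Suc n. (1 - Q b) * (\<Prod>i=b+1..n. Q i))
       + (1 - Q (Suc n)) * (r (Suc n) + T)"
  proof -
    have "(\<Sum>b<Suc n. (1 - Q b) * (\<Prod>i=b+1..Suc n. Q i) * (r b + T * real (Suc (Suc n) - b)))
       = (\<Sum>b<Suc n. Q (Suc n) * ((1 - Q b) * (\<Prod>i=b+1..n. Q i) * (r b + T * real (Suc n - b)))
            + Q (Suc n) * T * ((1 - Q b) * (\<Prod>i=b+1..n. Q i)))"
    proof (intro sum.cong refl)
      fix b assume "b \<in> {..<Suc n}"
      then have "b \<le> n" by simp
      then have "real (Suc (Suc n) - b) = real (Suc n - b) + 1" by (simp add: Suc_diff_le)
      then show "(1 - Q b) * (\<Prod>i=b+1..Suc n. Q i) * (r b + T * real (Suc (Suc n) - b))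
         = Q (Suc n) * ((1 - Q b) * (\<Prod>i=b+1..n. Q i) * (r b + T * real (Suc n - b)))
            + Q (Suc n) * T * ((1 - Q b) * (\<Prod>i=b+1..n. Q i))"
        using \<open>b \<le> n\<close> by (simp add: prod.nat_ivl_Suc' algebra_simps)
    qed
    moreover have "(1 - Q (Suc n)) * (\<Prod>i=Suc n+1..Suc n. Q i) * (r (Suc n) + T * real (Suc (Suc n) - Suc n))
       = (1 - Q (Suc n)) * (r (Suc n) + T)" by simp
    ultimately show ?thesis
      by (simp only: sum.lessThan_Suc[of _ "Suc n"] sum.distrib sum_distrib_left)
  qed
  have s2: "(\<Sum>b<Suc (Suc n). \<Prod>i=b..Suc n. Q i) = Q (Suc n) * (\<Sum>b<Suc n. \<Prod>i=b..n. Q i) + Q (Suc n)"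
  proof -
    have "(\<Sum>b<Suc n. \<Prod>i=b..Suc n. Q i) = (\<Sum>b<Suc n. Q (Suc n) * (\<Prod>i=b..n. Q i))"
      by (intro sum.cong refl) (simp add: prod.nat_ivl_Suc')
    moreover have "(\<Prod>i=Suc n..Suc n. Q i) = Q (Suc n)" by simp
    ultimately show ?thesis by (simp only: sum.lessThan_Suc[of _ "Suc n"] sum_distrib_left)
  qed
  show ?case
    unfolding s1 s2 t ddg.simps Suc.IH[symmetric] by (simp del: sum.lessThan_Suc add: algebra_simps)
qed

lemma reidx: "(\<Sum>\<kappa>=1..(m::nat). H \<kappa>) = (\<Sum>b<m. H (m - b) :: real)"
  by (rule sum.reindex_bij_witness[where i="\<lambda>b. m - b" and j="\<lambda>\<kappa>. m - \<kappa>"]) auto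



primrec Dl :: "nat \<Rightarrow> (nat\<times>nat \<Rightarrow> bool) \<Rightarrow> nat \<Rightarrow> nat" where
  "Dl T w 0 = 0"
| "Dl T w (Suc n) = (if Zb T w (Suc n) then Wb T w (Suc n) else T + Dl T w n)"

lemma kappa_props:
  assumes "n \<ge> 1"
  shows "1 \<le> kappa T n w \<and> kappa T n w \<le> n \<and> Zb T w (n - kappa T n w)"
  unfolding kappa_def by (rule LeastI[of _ n]) (use assms in \<open>auto simp: Zb_def\<close>)

lemma kappa_min: "1 \<le> m \<Longrightarrow> m \<le> n \<Longrightarrow> Zb T w (n - m) \<Longrightarrow> kappa T n w \<le> m"
  unfolding kappa_def by (rule Least_le) auto

lemma kappa_Suc: "kappa T (Suc n) w = (if Zb T w n then 1 else Suc (kappa T n w))"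
proof (cases "Zb T w n")
  case True
  show ?thesis unfolding kappa_def using True by (intro Least_equality) auto
next
  case False
  then have n: "n \<ge> 1" by (cases n) (auto simp: Zb_def)
  note m = kappa_props[OF n, of T w]
  have "(LEAST m. 1 \<le> m \<and> m \<le> Suc n \<and> Zb T w (Suc n - m)) = Suc (kappa T n w)"
  proof (rule Least_equality)
    show "1 \<le> Suc (kappa T n w) \<and> Suc (kappa T n w) \<le> Suc n \<and> Zb T w (Suc n - Suc (kappa T n w))"
      using m by simp
  next
    fix y assume y: "1 \<le> y \<and> y \<le> Suc n \<and> Zb T w (Suc n - y)"
    with False have "y \<noteq> 1" by auto
    with y obtain y' where y': "y = Suc y'" "1 \<le> y'" by (cases y) auto
    then have "kappa T n w \<le> y'" using y by (intro kappa_min) auto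
    then show "Suc (kappa T n w) \<le> y" using y' by simp
  qed
  then show ?thesis using False by (simp add: kappa_def)
qed

lemma peak_D: "T * (kappa T (Suc n) w - 1) + Wb T w (Suc n - kappa T (Suc n) w) = Dl T w n"
proof (induction n)
  case 0
  then show ?case by (simp add: kappa_Suc Zb_def Wb_def)
next
  case (Suc n)
  note m = kappa_props[of "Suc n" T w]
  show ?case
  proof (cases "Zb T w (Suc n)")
    case True
    then show ?thesis by (simp add: kappa_Suc)
  next
    case False
    have "T * (kappa T (Suc n) w) = T + T * (kappa T (Suc n) w - 1)"
      using m by (cases "kappa T (Suc n) w") auto
    then show ?thesis using False Suc.IH by (simp add: kappa_Suc)
  qed
qed

lemma Zb_cong: "(\<And>j. j < T \<Longrightarrow> w (b,j) = w' (b,j)) \<Longrightarrow> Zb T w b = Zb T w' b"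
  by (auto simp: Zb_def)
lemma Wb_cong: "(\<And>j. j < T \<Longrightarrow> w (b,j) = w' (b,j)) \<Longrightarrow> Wb T w b = Wb T w' b"
proof -
  assume a: "\<And>j. j < T \<Longrightarrow> w (b,j) = w' (b,j)"
  have "(\<lambda>j. j < T \<and> w (b,j)) = (\<lambda>j. j < T \<and> w' (b,j))" using a by auto
  then show ?thesis by (simp add: Wb_def)
qed
lemma Xb_cong: "(\<And>j. j < T \<Longrightarrow> w (b,j) = w' (b,j)) \<Longrightarrow> Xb T w b = Xb T w' b"
proof -
  assume a: "\<And>j. j < T \<Longrightarrow> w (b,j) = w' (b,j)"
  have "(\<lambda>j. j < T \<and> w (b,j)) = (\<lambda>j. j < T \<and> w' (b,j))" using a by auto
  then show ?thesis by (simp add: Xb_def)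
qed

lemma Dl_cong: "(\<And>i j. 1 \<le> i \<Longrightarrow> i \<le> n \<Longrightarrow> j < T \<Longrightarrow> w (i,j) = w' (i,j)) \<Longrightarrow> Dl T w n = Dl T w' n"
proof (induction n)
  case 0
  then show ?case by simp
next
  case (Suc n)
  have z: "Zb T w (Suc n) = Zb T w' (Suc n)" by (rule Zb_cong) (rule Suc.prems, auto)
  have ww: "Wb T w (Suc n) = Wb T w' (Suc n)" by (rule Wb_cong) (rule Suc.prems, auto)
  have "Dl T w n = Dl T w' n" by (rule Suc.IH) (rule Suc.prems, auto)
  then show ?case using z ww by simp
qed

lemma Zb_Zt: "b \<noteq> 0 \<Longrightarrow> Zb T w b = Zt T w b" by (simp add: Zb_def Zt_def)
lemma Wb_Wt: "b \<noteq> 0 \<Longrightarrow> Wb T w b = Wt T w b" by (simp add: Wb_def Wt_def)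
lemma Xb_Xt: "Xb T w b = Xt T w b" by (simp add: Xb_def Xt_def)

definition mrg :: "'a set \<Rightarrow> ('a \<Rightarrow> bool) \<Rightarrow> ('a \<Rightarrow> bool) \<Rightarrow> 'a \<Rightarrow> bool" where
  "mrg A f g = (\<lambda>x. if x \<in> A then f x else g x)"

lemma Sn_Suc: "Pi_pmf ({1..Suc n}\<times>{..<T}) False (BP p) =
   map_pmf (\<lambda>(f,g). mrg ({1..n}\<times>{..<T}) f g)
     (pair_pmf (Pi_pmf ({1..n}\<times>{..<T}) False (BP p)) (Pi_pmf ({Suc n}\<times>{..<T}) False (BP p)))"
proof -
  have e: "{1..Suc n}\<times>{..<T} = {1..n}\<times>{..<T} \<union> {Suc n}\<times>{..<T}" by auto
  show ?thesis unfolding e mrg_def by (rule Pi_pmf_union) auto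
qed

lemma blk_Z1:
  assumes "0 \<le> p b" "p b \<le> 1"
  shows "measure_pmf.expectation (Pi_pmf ({b}\<times>{..<t}) False (BP p)) (\<lambda>w. if Zt t w b then 1 else 0) = 1 - (1 - p b)^t"
proof -
  have fin: "finite (set_pmf (Pi_pmf ({b}\<times>{..<t}) False (BP p)))" by (rule fin_Pi_pmf) auto
  have "(\<lambda>w. if Zt t w b then 1 else (0::real)) = (\<lambda>w. 1 + (-1) * (if Zt t w b then 0 else 1))" by auto
  then show ?thesis by (simp only: exp_lin[OF fin] blk_Z[of p b, OF assms]) simp
qed

lemma exp_aff:
  fixes f :: "'a \<Rightarrow> real"
  assumes "finite (set_pmf M)"
  shows "measure_pmf.expectation M (\<lambda>x. a + c * f x) = a + c * measure_pmf.expectation M f"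
  using exp_lin[OF assms, of "\<lambda>_. a" c f] by simp

lemma E_D:
  assumes "\<And>i. i \<in> {1..n} \<Longrightarrow> 0 < p i \<and> p i \<le> 1"
  shows "measure_pmf.expectation (Pi_pmf ({1..n}\<times>{..<T}) False (BP p)) (\<lambda>w. real (Dl T w n))
     = ddg (real T) (\<lambda>i. (1 - p i)^T) (\<lambda>i. (1 - p i) / p i) n"
  using assms
proof (induction n)
  case 0
  then show ?case by simp
next
  case (Suc n)
  let ?A = "{1..n}\<times>{..<T}"
  let ?S = "Pi_pmf ?A False (BP p)"
  let ?B = "Pi_pmf ({Suc n}\<times>{..<T}) False (BP p)"
  have finS: "finite (set_pmf ?S)" by (rule fin_Pi_pmf) auto
  have finB: "finite (set_pmf ?B)" by (rule fin_Pi_pmf) auto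
  have pS: "0 < p (Suc n)" "p (Suc n) \<le> 1" using Suc.prems by auto
  have IH: "measure_pmf.expectation ?S (\<lambda>w. real (Dl T w n)) = ddg (real T) (\<lambda>i. (1 - p i)^T) (\<lambda>i. (1 - p i) / p i) n"
    using Suc.prems by (intro Suc.IH) auto
  have pw: "real (Dl T (mrg ?A f g) (Suc n))
      = 0 + 1 * (if Zt T g (Suc n) then real (Wt T g (Suc n)) else 0) + (real T + real (Dl T f n)) * (if Zt T g (Suc n) then 0 else 1)" for f g
  proof -
    have z: "Zb T (mrg ?A f g) (Suc n) = Zt T g (Suc n)"
      by (subst Zb_cong[where w'=g]) (auto simp: Zb_Zt mrg_def)
    have ww: "Wb T (mrg ?A f g) (Suc n) = Wt T g (Suc n)"
      by (subst Wb_cong[where w'=g]) (auto simp: Wb_Wt mrg_def)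
    have d: "Dl T (mrg ?A f g) n = Dl T f n"
      by (rule Dl_cong) (auto simp: mrg_def)
    show ?thesis by (simp only: Dl.simps z ww d) simp
  qed
  have "measure_pmf.expectation (Pi_pmf ({1..Suc n}\<times>{..<T}) False (BP p)) (\<lambda>w. real (Dl T w (Suc n)))
     = measure_pmf.expectation ?S (\<lambda>f. measure_pmf.expectation ?B (\<lambda>g.
         0 + 1 * (if Zt T g (Suc n) then real (Wt T g (Suc n)) else 0) + (real T + real (Dl T f n)) * (if Zt T g (Suc n) then 0 else 1)))"
    apply (subst Sn_Suc)
    apply (subst integral_map_pmf)
    apply (subst exp_pair[OF finS finB])
    apply (simp only: pw case_prod_conv)
    done
  also have "\<dots> = measure_pmf.expectation ?S (\<lambda>f.
       ((1 - p (Suc n)) * (1 - (1 - p (Suc n))^T) / p (Suc n) - real T * (1 - p (Suc n))^T + (1 - p (Suc n))^T * real T)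
        + (1 - p (Suc n))^T * real (Dl T f n))"
    by (simp only: exp_lin3[OF finB] blk_W[of p, OF pS] blk_Z[of p, OF less_imp_le[OF pS(1)] pS(2)]) (simp add: algebra_simps)
  also have "\<dots> = ddg (real T) (\<lambda>i. (1 - p i)^T) (\<lambda>i. (1 - p i) / p i) (Suc n)"
    by (simp only: exp_aff[OF finS] IH ddg.simps) (simp add: algebra_simps)
  finally show ?case .
qed



theorem theorem2:
  fixes T k :: nat and p :: "nat \<Rightarrow> real"
  assumes "T \<ge> 1" and "k \<ge> 1"
    and "\<And>i. i \<in> {1..k} \<Longrightarrow> 0 < p i \<and> p i \<le> 1"
    and "p 0 = 1"
  shows "measure_pmf.expectation
           (cond_pmf (slot_space T k p) {w. Zb T w k}) (peak_latency T k)
       = (\<Sum>\<kappa>=1..k. (1 - (1 - p (k - \<kappa>)) ^ T) * (\<Prod>i=k-\<kappa>+1..k-1. (1 - p i) ^ T)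
                     * ((1 - p (k - \<kappa>)) / p (k - \<kappa>) + real T * real \<kappa>))
         - real T * (\<Sum>\<kappa>=1..k. \<Prod>i=k-\<kappa>..k-1. (1 - p i) ^ T)
         - real T
         + ((1 - p k) / p k - real T * (1 - p k) ^ T / (1 - (1 - p k) ^ T))
         + 1"
proof -
  obtain n where kn: "k = Suc n" using assms(2) by (cases k) auto
  let ?A = "{1..n}\<times>{..<T}"
  let ?S = "Pi_pmf ?A False (BP p)"
  let ?B = "Pi_pmf ({Suc n}\<times>{..<T}) False (BP p)"
  let ?K = "Pi_pmf ({1..Suc n}\<times>{..<T}) False (BP p)"
  let ?Q = "(1 - p (Suc n))^T"
  let ?G = "(1 - p (Suc n)) * (1 - ?Q) / p (Suc n) - real T * ?Q"
  let ?dd = "ddg (real T) (\<lambda>i. (1 - p i)^T) (\<lambda>i. (1 - p i) / p i) n"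
  have sk: "slot_space T (Suc n) p = ?K" by (simp add: slot_space_def)
  have finS: "finite (set_pmf ?S)" by (rule fin_Pi_pmf) auto
  have finB: "finite (set_pmf ?B)" by (rule fin_Pi_pmf) auto
  have finK: "finite (set_pmf ?K)" by (rule fin_Pi_pmf) auto
  have pk: "0 < p (Suc n)" "p (Suc n) \<le> 1" using assms(3)[of "Suc n"] kn by auto
  have Qlt: "?Q < 1"
    using pk assms(1) by (subst power_less_one_iff) auto
  have ED: "measure_pmf.expectation ?S (\<lambda>w. real (Dl T w n)) = ?dd"
    using assms(3) kn by (intro E_D) auto
  have z: "Zb T (mrg ?A f g) (Suc n) = Zt T g (Suc n)" for f g
    by (subst Zb_cong[where w'=g]) (auto simp: Zb_Zt mrg_def)
  have x: "Xb T (mrg ?A f g) (Suc n) = Xt T g (Suc n)" for f g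
    by (subst Xb_cong[where w'=g]) (auto simp: Xb_Xt mrg_def)
  have d: "Dl T (mrg ?A f g) n = Dl T f n" for f g
    by (rule Dl_cong) (auto simp: mrg_def)
  have EZ: "measure_pmf.expectation ?K (\<lambda>w. if Zb T w (Suc n) then 1 else 0) = 1 - ?Q"
  proof -
    have "measure_pmf.expectation ?K (\<lambda>w. if Zb T w (Suc n) then 1 else 0)
       = measure_pmf.expectation ?S (\<lambda>f. measure_pmf.expectation ?B (\<lambda>g. if Zt T g (Suc n) then 1 else (0::real)))"
      apply (subst Sn_Suc)
      apply (subst integral_map_pmf)
      apply (subst exp_pair[OF finS finB])
      apply (simp only: z case_prod_conv)
      done
    also have "\<dots> = 1 - ?Q"
      using pk by (simp add: blk_Z1)
    finally show ?thesis .
  qed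
  have peak: "peak_latency T (Suc n) w = real (Dl T w n) + real (Xb T w (Suc n)) + 1" for w
    unfolding peak_latency_def
    using peak_D[of T n w] by simp
  have EP: "measure_pmf.expectation ?K (\<lambda>w. if Zb T w (Suc n) then peak_latency T (Suc n) w else 0)
      = ?G + (1 - ?Q) * (?dd + 1)"
  proof -
    have pw: "(if Zb T (mrg ?A f g) (Suc n) then peak_latency T (Suc n) (mrg ?A f g) else 0)
       = 0 + 1 * (if Zt T g (Suc n) then real (Xt T g (Suc n)) else 0) + (real (Dl T f n) + 1) * (if Zt T g (Suc n) then 1 else 0)" for f g
      by (simp only: peak z x d) simp
    have "measure_pmf.expectation ?K (\<lambda>w. if Zb T w (Suc n) then peak_latency T (Suc n) w else 0)
       = measure_pmf.expectation ?S (\<lambda>f. measure_pmf.expectation ?B (\<lambda>g.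
            0 + 1 * (if Zt T g (Suc n) then real (Xt T g (Suc n)) else 0) + (real (Dl T f n) + 1) * (if Zt T g (Suc n) then 1 else 0)))"
      apply (subst Sn_Suc)
      apply (subst integral_map_pmf)
      apply (subst exp_pair[OF finS finB])
      apply (simp only: pw case_prod_conv)
      done
    also have "\<dots> = measure_pmf.expectation ?S (\<lambda>f. (?G + (1 - ?Q)) + (1 - ?Q) * real (Dl T f n))"
      by (simp only: exp_lin3[OF finB] blk_X[of p, OF pk] blk_Z1[of p, OF less_imp_le[OF pk(1)] pk(2)]) (simp add: algebra_simps)
    also have "\<dots> = ?G + (1 - ?Q) * (?dd + 1)"
      by (simp only: exp_aff[OF finS] ED) (simp add: algebra_simps)
    finally show ?thesis .
  qed
  have prob: "measure_pmf.prob ?K {w. Zb T w (Suc n)} = 1 - ?Q"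
  proof -
    have "(\<lambda>w. if Zb T w (Suc n) then 1 else 0::real) = indicator {w. Zb T w (Suc n)}"
      by (auto simp: indicator_def)
    with EZ show ?thesis by (simp add: measure_pmf.emeasure_eq_measure)
  qed
  have ne: "set_pmf ?K \<inter> {w. Zb T w (Suc n)} \<noteq> {}"
    using prob Qlt measure_pmf_zero_iff[of ?K "{w. Zb T w (Suc n)}"] by auto
  have LHS: "measure_pmf.expectation (cond_pmf (slot_space T k p) {w. Zb T w k}) (peak_latency T k)
      = (?G + (1 - ?Q) * (?dd + 1)) / (1 - ?Q)"
    unfolding kn sk
    by (subst exp_cond[OF finK ne]) (simp only: mem_Collect_eq EP prob)
  have Q0: "(\<lambda>i. (1 - p i)^T) 0 = 0" using assms(1,4) by simp
  have r0: "(\<lambda>i. (1 - p i) / p i) 0 = 0" using assms(4) by simp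
  have S1: "(\<Sum>\<kappa>=1..k. (1 - (1 - p (k - \<kappa>)) ^ T) * (\<Prod>i=k-\<kappa>+1..k-1. (1 - p i) ^ T)
                     * ((1 - p (k - \<kappa>)) / p (k - \<kappa>) + real T * real \<kappa>))
     = (\<Sum>b<Suc n. (1 - (1 - p b)^T) * (\<Prod>i=b+1..n. (1 - p i)^T) * ((1 - p b) / p b + real T * real (Suc n - b)))"
    unfolding kn reidx by (intro sum.cong refl) auto
  have S2: "(\<Sum>\<kappa>=1..k. \<Prod>i=k-\<kappa>..k-1. (1 - p i) ^ T) = (\<Sum>b<Suc n. \<Prod>i=b..n. (1 - p i) ^ T)"
    unfolding kn reidx by (intro sum.cong refl) auto
  have alg: "(\<Sum>b<Suc n. (1 - (1 - p b)^T) * (\<Prod>i=b+1..n. (1 - p i)^T) * ((1 - p b) / p b + real T * real (Suc n - b)))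
      - real T * (\<Sum>b<Suc n. \<Prod>i=b..n. (1 - p i) ^ T) - real T = ?dd"
    using alg_main[of "\<lambda>i. (1 - p i)^T" "\<lambda>i. (1 - p i) / p i" n "real T", OF Q0 r0] by simp
  show ?thesis
    unfolding LHS S1 S2 unfolding kn
    using alg Qlt pk by (simp add: field_simps)
qed

end
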